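(* The set $\mathcal W$ of $n\times n$ matrices is closed under matrix multiplication: if $P,Q\in\mathcal W$ then $PQ\in\mathcal W$.
   Context: Let $\mathcal N=\{1,\ldots,n\}$. A matrix is stochastic if it is entrywise nonnegative with row sums $1$. For stochastic $P$ and $\mathcal A\subseteq\mathcal N$, $F_P(\mathcal A)=\{j:\ p_{ij}>0\text{ for some } i\in\mathcal A\}$. $\mathcal W$ is the set of stochastic $n\times n$ matrices $P$ such that for any disjoint nonempty $\mathcal A,\tilde{\mathcal A}\subseteq\mathcal N$, either $F_P(\mathcal A)\cap F_P(\tilde{\mathcal A})\neq\emptyset$, or $F_P(\mathcal A)\cap F_P(\tilde{\mathcal A})=\emptyset$ and $|F_P(\mathcal A)\cup F_P(\tilde{\mathcal A})|\ge|\mathcal A\cup\tilde{\mathcal A}|$. *)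

theory Defs
  imports "HOL-Analysis.Analysis"
begin

text \<open>Matrices are real n x n matrices indexed by a finite type 'n (so N = UNIV :: 'n set).\<close>

definition stochastic :: "real^'n^'n \<Rightarrow> bool" where
  "stochastic P \<longleftrightarrow> (\<forall>i j. P $ i $ j \<ge> 0) \<and> (\<forall>i. (\<Sum>j\<in>UNIV. P $ i $ j) = 1)"

definition F :: "real^'n^'n \<Rightarrow> 'n set \<Rightarrow> 'n set" where
  "F P A = {j. \<exists>i\<in>A. P $ i $ j > 0}"

definition W_set :: "(real^'n^'n) set" where
  "W_set = {P. stochastic P \<and>
     (\<forall>A B. A \<noteq> {} \<longrightarrow> B \<noteq> {} \<longrightarrow> A \<inter> B = {} \<longrightarrow>
        (F P A \<inter> F P B \<noteq> {} \<or>
         (F P A \<inter> F P B = {} \<and> card (F P A \<union> F P B) \<ge> card (A \<union> B))))}"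

end

theory Submission
  imports Defs
begin

lemma prod_entry: "(P ** Q) $ i $ j = (\<Sum>k\<in>UNIV. P $ i $ k * Q $ k $ j)"
  by (simp add: matrix_matrix_mult_def)

lemma stoch_mult:
  fixes P Q :: "real^'n^'n"
  assumes "stochastic P" "stochastic Q"
  shows "stochastic (P ** Q)"
  unfolding stochastic_def
proof (intro conjI allI)
  fix i j
  show "0 \<le> (P ** Q) $ i $ j" unfolding prod_entry
    using assms by (intro sum_nonneg mult_nonneg_nonneg) (auto simp: stochastic_def)
next
  fix i
  have "(\<Sum>j\<in>UNIV. (P ** Q) $ i $ j) = (\<Sum>k\<in>UNIV. \<Sum>j\<in>UNIV. P $ i $ k * Q $ k $ j)"
    unfolding prod_entry by (rule sum.swap)
  also have "\<dots> = (\<Sum>k\<in>UNIV. P $ i $ k * (\<Sum>j\<in>UNIV. Q $ k $ j))"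
    by (simp add: sum_distrib_left)
  also have "\<dots> = 1" using assms by (simp add: stochastic_def)
  finally show "(\<Sum>j\<in>UNIV. (P ** Q) $ i $ j) = 1" .
qed

lemma F_mult:
  fixes P Q :: "real^'n^'n"
  assumes "stochastic P" "stochastic Q"
  shows "F (P ** Q) A = F Q (F P A)"
proof -
  have "(P ** Q) $ i $ j > 0 \<longleftrightarrow> (\<exists>k. P $ i $ k > 0 \<and> Q $ k $ j > 0)" for i j
  proof -
    have nn: "\<forall>k\<in>UNIV. 0 \<le> P $ i $ k * Q $ k $ j"
      using assms by (auto simp: stochastic_def)
    have "(P ** Q) $ i $ j > 0 \<longleftrightarrow> (\<exists>k. P $ i $ k * Q $ k $ j > 0)"
    proof
      assume "(P ** Q) $ i $ j > 0"
      then have "(\<Sum>k\<in>UNIV. P $ i $ k * Q $ k $ j) \<noteq> 0" unfolding prod_entry by simp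
      then obtain k where "P $ i $ k * Q $ k $ j \<noteq> 0" by (meson sum.neutral)
      with nn show "\<exists>k. P $ i $ k * Q $ k $ j > 0" by (metis UNIV_I less_eq_real_def)
    next
      assume "\<exists>k. P $ i $ k * Q $ k $ j > 0"
      then obtain k where k: "P $ i $ k * Q $ k $ j > 0" by blast
      have "P $ i $ k * Q $ k $ j \<le> (\<Sum>k\<in>UNIV. P $ i $ k * Q $ k $ j)"
        by (rule member_le_sum) (use nn in auto)
      with k show "(P ** Q) $ i $ j > 0" unfolding prod_entry by linarith
    qed
    also have "\<dots> \<longleftrightarrow> (\<exists>k. P $ i $ k > 0 \<and> Q $ k $ j > 0)"
      using assms unfolding stochastic_def
      by (metis less_eq_real_def mult_pos_pos zero_less_mult_pos mult_zero_left)
    finally show ?thesis .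
  qed
  then show ?thesis unfolding F_def by auto
qed

lemma F_nonempty:
  fixes P :: "real^'n^'n"
  assumes "stochastic P" "A \<noteq> {}"
  shows "F P A \<noteq> {}"
proof -
  obtain i where i: "i \<in> A" using assms by auto
  have "\<exists>j. P $ i $ j > 0"
  proof (rule ccontr)
    assume "\<not> ?thesis"
    then have "\<forall>j. P $ i $ j = 0" using assms(1) unfolding stochastic_def
      by (metis less_eq_real_def)
    then have "(\<Sum>j\<in>UNIV. P $ i $ j) = 0" by simp
    with assms(1) show False unfolding stochastic_def by simp
  qed
  with i show ?thesis unfolding F_def by auto
qed

lemma F_mono: "A \<subseteq> B \<Longrightarrow> F P A \<subseteq> F P B"
  unfolding F_def by auto

theorem mainTheorem7:
  fixes P Q :: "real^'n^'n"
  assumes "P \<in> W_set" and "Q \<in> W_set"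
  shows "P ** Q \<in> W_set"
proof -
  have sP: "stochastic P" and sQ: "stochastic Q" using assms by (auto simp: W_set_def)
  have WP: "\<And>A B. A \<noteq> {} \<Longrightarrow> B \<noteq> {} \<Longrightarrow> A \<inter> B = {} \<Longrightarrow>
        F P A \<inter> F P B \<noteq> {} \<or> (F P A \<inter> F P B = {} \<and> card (F P A \<union> F P B) \<ge> card (A \<union> B))"
    using assms(1) by (auto simp: W_set_def)
  have WQ: "\<And>A B. A \<noteq> {} \<Longrightarrow> B \<noteq> {} \<Longrightarrow> A \<inter> B = {} \<Longrightarrow>
        F Q A \<inter> F Q B \<noteq> {} \<or> (F Q A \<inter> F Q B = {} \<and> card (F Q A \<union> F Q B) \<ge> card (A \<union> B))"
    using assms(2) by (auto simp: W_set_def)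
  have "F (P ** Q) A \<inter> F (P ** Q) B \<noteq> {} \<or>
        (F (P ** Q) A \<inter> F (P ** Q) B = {} \<and> card (F (P ** Q) A \<union> F (P ** Q) B) \<ge> card (A \<union> B))"
    if A: "A \<noteq> {}" and B: "B \<noteq> {}" and AB: "A \<inter> B = {}" for A B
  proof -
    let ?A = "F P A" and ?B = "F P B"
    have nA: "?A \<noteq> {}" and nB: "?B \<noteq> {}" using F_nonempty[OF sP] A B by auto
    show ?thesis
    proof (cases "?A \<inter> ?B = {}")
      case False
      then obtain k where k: "k \<in> ?A" "k \<in> ?B" by auto
      have "F Q {k} \<noteq> {}" using F_nonempty[OF sQ] by auto
      moreover have "F Q {k} \<subseteq> F Q ?A" using k by (intro F_mono) simp
      moreover have "F Q {k} \<subseteq> F Q ?B" using k by (intro F_mono) simp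
      ultimately have "F Q ?A \<inter> F Q ?B \<noteq> {}" by blast
      then show ?thesis by (simp add: F_mult[OF sP sQ])
    next
      case True
      with WP[OF A B AB] have c: "card (?A \<union> ?B) \<ge> card (A \<union> B)" by auto
      from WQ[OF nA nB True] c show ?thesis unfolding F_mult[OF sP sQ] by linarith
    qed
  qed
  then show ?thesis using stoch_mult[OF sP sQ] unfolding W_set_def by blast
qed

end
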